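(* Let $r\ge 2$ and $m$ be integers with $0\le 2m\le r$, $n=2r-4m$, and let $f:S^2(S^r(\mathbb{C}^2))\to S^{n}(\mathbb{C}^2)$ be an $\mathfrak{sl}_2(\mathbb{C})$-equivariant linear map, written $f=\sum_{k=0}^n q_k w_k$, with $\lambda=q_0(x_0x_{2m})\neq 0$. Then for every $0\le k\le n/2$, $$q_k(x_0x_{2m+k})=q_{n-k}(x_rx_{r-2m-k})\neq 0.$$ Moreover, if $m=0$, then for every $0\le k\le n/2$ and every $0\le i\le k$, $$q_k(x_ix_{k-i})=q_{n-k}(x_{r-i}x_{r-k+i})\neq 0.$$
   Context: $\mathfrak{sl}_2(\mathbb{C})$ has basis $X=\begin{pmatrix}0&1\\0&0\end{pmatrix}$, $H=\begin{pmatrix}1&0\\0&-1\end{pmatrix}$, $Y=\begin{pmatrix}0&0\\1&0\end{pmatrix}$, acting on the irreducible modules $S^d(\mathbb{C}^2)$. Let $x_0\in S^r(\mathbb{C}^2)$ be a highest weight vector and $x_i=Y^ix_0/i!$ ($0\le i\le r$), so $Yx_i=(i+1)x_{i+1}$, $Xx_i=(r-i+1)x_{i-1}$, $Hx_i=(r-2i)x_i$. Let $w_0\in S^n(\mathbb{C}^2)$ be a highest weight vector and $w_k=Y^kw_0/k!$ ($0\le k\le n$). Writing $f=\sum_{k=0}^n q_kw_k$ means $f(u)=\sum_k q_k(u)w_k$ for linear forms $q_k$ on $S^2(S^r(\mathbb{C}^2))$; $q_k(x_ix_j)$ is the value on the product $x_ix_j$. *)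

theory Defs
  imports Complex_Main
begin

text \<open>An sl2-equivariant linear map f : S^2(S^r(C^2)) -> S^n(C^2), written
  f = sum_k q_k w_k, is encoded by its coefficient function
  q k i j = q_k(x_i x_j)  (i, j \<le> r, k \<le> n),
  i.e. by the values of the linear forms q_k on the spanning products x_i x_j.
  Linearity is automatic (a linear map is determined by its values on a basis);
  well-definedness on the symmetric square means q k i j = q k j i.
  Equivariance is imposed on the spanning products x_i x_j for Z = H, Y, X, using
  Z(x_i x_j) = (Z x_i) x_j + x_i (Z x_j) with
  Y x_i = (i+1) x_(i+1) (x_(r+1) = 0), X x_i = (r-i+1) x_(i-1) (x_(-1) = 0),
  H x_i = (r-2i) x_i, and likewise for w_k in S^n.\<close>

definition sym_well_defined :: "nat \<Rightarrow> nat \<Rightarrow> (nat \<Rightarrow> nat \<Rightarrow> nat \<Rightarrow> complex) \<Rightarrow> bool" where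
  "sym_well_defined r n q \<longleftrightarrow> (\<forall>k\<le>n. \<forall>i\<le>r. \<forall>j\<le>r. q k i j = q k j i)"

definition H_equivariant :: "nat \<Rightarrow> nat \<Rightarrow> (nat \<Rightarrow> nat \<Rightarrow> nat \<Rightarrow> complex) \<Rightarrow> bool" where
  "H_equivariant r n q \<longleftrightarrow> (\<forall>k\<le>n. \<forall>i\<le>r. \<forall>j\<le>r.
     of_int ((int r - 2 * int i) + (int r - 2 * int j)) * q k i j
       = of_int (int n - 2 * int k) * q k i j)"

definition Y_equivariant :: "nat \<Rightarrow> nat \<Rightarrow> (nat \<Rightarrow> nat \<Rightarrow> nat \<Rightarrow> complex) \<Rightarrow> bool" where
  "Y_equivariant r n q \<longleftrightarrow> (\<forall>k\<le>n. \<forall>i\<le>r. \<forall>j\<le>r.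
     (if i < r then of_nat (i + 1) * q k (i + 1) j else 0)
       + (if j < r then of_nat (j + 1) * q k i (j + 1) else 0)
     = (if 0 < k then of_nat k * q (k - 1) i j else 0))"

definition X_equivariant :: "nat \<Rightarrow> nat \<Rightarrow> (nat \<Rightarrow> nat \<Rightarrow> nat \<Rightarrow> complex) \<Rightarrow> bool" where
  "X_equivariant r n q \<longleftrightarrow> (\<forall>k\<le>n. \<forall>i\<le>r. \<forall>j\<le>r.
     (if 0 < i then of_nat (r - i + 1) * q k (i - 1) j else 0)
       + (if 0 < j then of_nat (r - j + 1) * q k i (j - 1) else 0)
     = (if k < n then of_nat (n - k) * q (k + 1) i j else 0))"

definition sl2_equivariant_map :: "nat \<Rightarrow> nat \<Rightarrow> (nat \<Rightarrow> nat \<Rightarrow> nat \<Rightarrow> complex) \<Rightarrow> bool" where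
  "sl2_equivariant_map r n q \<longleftrightarrow> sym_well_defined r n q \<and> H_equivariant r n q
     \<and> Y_equivariant r n q \<and> X_equivariant r n q"

end

theory Submission
  imports Defs
begin

theorem mainTheorem6:
  fixes r m n :: nat and q :: "nat \<Rightarrow> nat \<Rightarrow> nat \<Rightarrow> complex"
  assumes "r \<ge> 2" and "2 * m \<le> r" and "n = 2 * r - 4 * m"
    and "sl2_equivariant_map r n q"
    and "q 0 0 (2 * m) \<noteq> 0"
  shows "(\<forall>k. 2 * k \<le> n \<longrightarrow>
            q k 0 (2 * m + k) = q (n - k) r (r - 2 * m - k) \<and> q k 0 (2 * m + k) \<noteq> 0)
       \<and> (m = 0 \<longrightarrow> (\<forall>k i. 2 * k \<le> n \<longrightarrow> i \<le> k \<longrightarrow>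
            q k i (k - i) = q (n - k) (r - i) (r - k + i) \<and> q k i (k - i) \<noteq> 0))"
proof -
  have S: "\<And>k i j. k \<le> n \<Longrightarrow> i \<le> r \<Longrightarrow> j \<le> r \<Longrightarrow> q k i j = q k j i"
    using assms(4) unfolding sl2_equivariant_map_def sym_well_defined_def by blast
  have H: "\<And>k i j. k \<le> n \<Longrightarrow> i \<le> r \<Longrightarrow> j \<le> r \<Longrightarrow>
     of_int ((int r - 2 * int i) + (int r - 2 * int j)) * q k i j
       = of_int (int n - 2 * int k) * q k i j"
    using assms(4) unfolding sl2_equivariant_map_def H_equivariant_def by blast
  have Y: "\<And>k i j. k \<le> n \<Longrightarrow> i \<le> r \<Longrightarrow> j \<le> r \<Longrightarrow>
     (if i < r then of_nat (i + 1) * q k (i + 1) j else 0)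
       + (if j < r then of_nat (j + 1) * q k i (j + 1) else 0)
     = (if 0 < k then of_nat k * q (k - 1) i j else 0)"
    using assms(4) unfolding sl2_equivariant_map_def Y_equivariant_def by blast
  have X: "\<And>k i j. k \<le> n \<Longrightarrow> i \<le> r \<Longrightarrow> j \<le> r \<Longrightarrow>
     (if 0 < i then of_nat (r - i + 1) * q k (i - 1) j else 0)
       + (if 0 < j then of_nat (r - j + 1) * q k i (j - 1) else 0)
     = (if k < n then of_nat (n - k) * q (k + 1) i j else 0)"
    using assms(4) unfolding sl2_equivariant_map_def X_equivariant_def by blast
  define N where "N = r - 2 * m"
  have nN: "n = 2 * N" using assms(2,3) unfolding N_def by simp
  define a where "a k = q k 0 (2 * m + k)" for k
  define b where "b k = q (n - k) r (r - 2 * m - k)" for k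
  have reca: "of_nat (r - 2*m - k) * a k = of_nat (n - k) * a (k + 1)" if "k < N" for k
  proof -
    have h: "k \<le> n" "(0::nat) \<le> r" "2*m+k+1 \<le> r" using that nN unfolding N_def by auto
    have eq1: "r - (2*m+k+1) + 1 = r - 2*m - k" using that unfolding N_def by auto
    have eq2: "2*m+k+1-1 = 2*m+k" "2*m+k+1 = 2*m+(k+1)" by auto
    have c: "(0 < (0::nat)) = False" "(0 < 2*m+(k+1)) = True" "(k < n) = True" using that nN by auto
    have "0 + of_nat (r - 2*m - k) * q k 0 (2*m+k) = of_nat (n - k) * q (k + 1) 0 (2*m+(k+1))"
      using X[of k 0 "2*m+k+1", OF h, unfolded eq1, unfolded eq2(1), unfolded eq2(2)] by (simp only: c if_True if_False)
    then show ?thesis unfolding a_def by (simp only: add_0_left)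
  qed
  have recb: "of_nat (r - 2*m - k) * b k = of_nat (n - k) * b (k + 1)" if "k < N" for k
  proof -
    define j where "j = r - 2*m - k - 1"
    have h: "n - k \<le> n" "r \<le> r" "j \<le> r" using that nN unfolding N_def j_def by auto
    have c: "(r < r) = False" "(j < r) = True" "(0 < n - k) = True" using that nN unfolding N_def j_def by auto
    have e1: "j + 1 = r - 2*m - k" and e2: "n - k - 1 = n - (k+1)" and e3: "j = r - 2*m - (k+1)"
      using that nN unfolding N_def j_def by auto
    have "0 + of_nat (j + 1) * q (n-k) r (j + 1) = of_nat (n - k) * q (n - k - 1) r j"
      using Y[of "n-k" r j, OF h] by (simp only: c if_True if_False)
    then have "0 + of_nat (r - 2*m - k) * q (n-k) r (r - 2*m - k) = of_nat (n - k) * q (n - (k+1)) r (r - 2*m - (k+1))"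
      unfolding e1 e2 by (simp only: e3)
    then show ?thesis unfolding b_def by (simp only: add_0_left)
  qed
  have abN: "a N = b N"
  proof -
    have "a N = q N 0 r" unfolding a_def N_def using assms(2) by simp
    also have "\<dots> = q N r 0" using S[of N 0 r] nN by simp
    also have "\<dots> = b N" unfolding b_def N_def using nN N_def by simp
    finally show ?thesis .
  qed
  have abd: "d \<le> N \<Longrightarrow> a (N - d) = b (N - d)" for d
  proof (induction d)
    case 0 then show ?case using abN by simp
  next
    case (Suc d)
    define k where "k = N - Suc d"
    have k1: "k + 1 = N - d" "k < N" using Suc.prems unfolding k_def by auto
    have "of_nat (r - 2*m - k) * a k = of_nat (r - 2*m - k) * b k"
      using reca[OF k1(2)] recb[OF k1(2)] Suc k1 by simp
    moreover have "r - 2*m - k \<noteq> 0" using k1 unfolding N_def by simp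
    then have "(of_nat (r - 2*m - k) :: complex) \<noteq> 0" by (metis of_nat_eq_0_iff)
    ultimately show ?case unfolding k_def by simp
  qed
  have ab: "k \<le> N \<Longrightarrow> a k = b k" for k
    using abd[of "N - k"] by simp
  have anz: "k \<le> N \<Longrightarrow> a k \<noteq> 0" for k
  proof (induction k)
    case 0 then show ?case using assms(5) unfolding a_def by simp
  next
    case (Suc k)
    then have "k < N" by simp
    have "r - 2*m - k \<noteq> 0" "n - k \<noteq> 0"
      using \<open>k < N\<close> nN unfolding N_def by auto
    then have "(of_nat (r - 2*m - k) :: complex) \<noteq> 0" "(of_nat (n - k) :: complex) \<noteq> 0"
      by (metis of_nat_eq_0_iff)+
    then show ?case using reca[OF \<open>k < N\<close>] Suc by (metis Suc_eq_plus1 Suc_leD mult_eq_0_iff)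
  qed
  have part1: "\<forall>k. 2 * k \<le> n \<longrightarrow>
            q k 0 (2 * m + k) = q (n - k) r (r - 2 * m - k) \<and> q k 0 (2 * m + k) \<noteq> 0"
  proof (intro allI impI)
    fix k assume "2 * k \<le> n"
    then have "k \<le> N" using nN by simp
    then show "q k 0 (2 * m + k) = q (n - k) r (r - 2 * m - k) \<and> q k 0 (2 * m + k) \<noteq> 0"
      using ab anz unfolding a_def b_def by simp
  qed
  have part2: "m = 0 \<longrightarrow> (\<forall>k i. 2 * k \<le> n \<longrightarrow> i \<le> k \<longrightarrow>
            q k i (k - i) = q (n - k) (r - i) (r - k + i) \<and> q k i (k - i) \<noteq> 0)"
  proof
    assume m0: "m = 0"
    have n2: "n = 2 * r" using m0 assms(3) by simp
    have Hz: "q k i j = 0" if "k \<le> n" "i \<le> r" "j \<le> r" "i + j \<noteq> k" for k i j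
    proof -
      have "of_int ((int r - 2 * int i) + (int r - 2 * int j)) \<noteq> (of_int (int n - 2 * int k) :: complex)"
        using that n2 by (subst of_int_eq_iff) linarith
      then show ?thesis using H[OF that(1-3)] by auto
    qed
    have symm: "\<forall>i j. i \<le> r \<longrightarrow> j \<le> r \<longrightarrow> q k i j = q (n - k) (r - i) (r - j)" if "k \<le> n" for k
      using that
    proof (induction k)
      case 0
      show ?case
      proof (intro allI impI)
        fix i j assume ij: "i \<le> r" "j \<le> r"
        show "q 0 i j = q (n - 0) (r - i) (r - j)"
        proof (cases "i = 0 \<and> j = 0")
          case True
          then show ?thesis using part1 m0 by auto
        next
          case False
          then show ?thesis using Hz[of 0 i j] Hz[of n "r-i" "r-j"] ij n2 by auto
        qed
      qed
    next
      case (Suc k)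
      then have kn: "k < n" "k \<le> n" by auto
      have IH: "\<And>i j. i \<le> r \<Longrightarrow> j \<le> r \<Longrightarrow> q k i j = q (n - k) (r - i) (r - j)"
        using Suc kn by blast
      show ?case
      proof (intro allI impI)
        fix i j assume ij: "i \<le> r" "j \<le> r"
        have Xe: "(if 0 < i then of_nat (r - i + 1) * q k (i - 1) j else 0)
           + (if 0 < j then of_nat (r - j + 1) * q k i (j - 1) else 0)
           = of_nat (n - k) * q (k + 1) i j" using X[OF kn(2) ij] kn by simp
        have Ye: "(if r - i < r then of_nat (r - i + 1) * q (n-k) (r - i + 1) (r-j) else 0)
           + (if r - j < r then of_nat (r - j + 1) * q (n-k) (r-i) (r - j + 1) else 0)
           = of_nat (n - k) * q (n - k - 1) (r-i) (r-j)"
          using Y[of "n-k" "r-i" "r-j"] kn by simp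
        have e1: "0 < i \<Longrightarrow> q k (i - 1) j = q (n-k) (r - i + 1) (r-j)"
          using IH[of "i-1" j] ij by (simp add: Suc_diff_le)
        have e2: "0 < j \<Longrightarrow> q k i (j - 1) = q (n-k) (r-i) (r - j + 1)"
          using IH[of i "j-1"] ij by (simp add: Suc_diff_le)
        have c1: "(0 < i) = (r - i < r)" "(0 < j) = (r - j < r)" using ij assms(1) by auto
        have "of_nat (n - k) * q (k + 1) i j = of_nat (n - k) * q (n - k - 1) (r-i) (r-j)"
          using Xe Ye e1 e2 c1 by auto
        moreover have "(of_nat (n - k) :: complex) \<noteq> 0" using kn by simp
        ultimately show "q (Suc k) i j = q (n - Suc k) (r - i) (r - j)" by simp
      qed
    qed
    have pos: "\<forall>i j. i \<le> r \<longrightarrow> j \<le> r \<longrightarrow> i + j = k \<longrightarrow> (\<exists>c::real. c > 0 \<and> q k i j = of_real c * q 0 0 0)" for k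
    proof (induction k)
      case 0 then show ?case by (auto intro: exI[of _ 1])
    next
      case (Suc k)
      show ?case
      proof (intro allI impI)
        fix i j assume ij: "i \<le> r" "j \<le> r" "i + j = Suc k"
        then have kn: "k < n" "k \<le> n" using n2 by auto
        have Xe: "(if 0 < i then of_nat (r - i + 1) * q k (i - 1) j else 0)
           + (if 0 < j then of_nat (r - j + 1) * q k i (j - 1) else 0)
           = of_nat (n - k) * q (k + 1) i j" using X[OF kn(2) ij(1,2)] kn by simp
        obtain c1 :: real where c1: "c1 \<ge> 0" "(if 0 < i then of_nat (r - i + 1) * q k (i - 1) j else 0) = of_real c1 * q 0 0 0" "0 < i \<Longrightarrow> c1 > 0"
        proof (cases "0 < i")
          case True
          have "i - 1 \<le> r" "i - 1 + j = k" using ij True by auto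
          then have "\<exists>c::real. c > 0 \<and> q k (i - 1) j = of_real c * q 0 0 0" using Suc.IH ij by blast
          then obtain c :: real where "c > 0" "q k (i - 1) j = of_real c * q 0 0 0" by blast
          then show ?thesis using that[of "real (r - i + 1) * c"] True by auto
        next
          case False then show ?thesis using that[of 0] by auto
        qed
        obtain c2 :: real where c2: "c2 \<ge> 0" "(if 0 < j then of_nat (r - j + 1) * q k i (j - 1) else 0) = of_real c2 * q 0 0 0" "0 < j \<Longrightarrow> c2 > 0"
        proof (cases "0 < j")
          case True
          have "j - 1 \<le> r" "i + (j - 1) = k" using ij True by auto
          then have "\<exists>c::real. c > 0 \<and> q k i (j - 1) = of_real c * q 0 0 0" using Suc.IH ij by blast
          then obtain c :: real where "c > 0" "q k i (j - 1) = of_real c * q 0 0 0" by blast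
          then show ?thesis using that[of "real (r - j + 1) * c"] True by auto
        next
          case False then show ?thesis using that[of 0] by auto
        qed
        have "c1 + c2 > 0" using c1 c2 ij by (cases "0 < i") auto
        have "of_nat (n - k) * q (k + 1) i j = of_real (c1 + c2) * q 0 0 0"
          using Xe c1 c2 by (simp add: distrib_right)
        then have "q (k + 1) i j = of_real ((c1 + c2) / real (n - k)) * q 0 0 0"
          using kn by (simp add: field_simps)
        moreover have "(c1 + c2) / real (n - k) > 0" using \<open>c1 + c2 > 0\<close> kn by simp
        ultimately show "\<exists>c::real. c > 0 \<and> q (Suc k) i j = of_real c * q 0 0 0" by auto
      qed
    qed
    show "\<forall>k i. 2 * k \<le> n \<longrightarrow> i \<le> k \<longrightarrow>
            q k i (k - i) = q (n - k) (r - i) (r - k + i) \<and> q k i (k - i) \<noteq> 0"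
    proof (intro allI impI)
      fix k i assume ki: "2 * k \<le> n" "i \<le> k"
      then have kr: "k \<le> r" "i \<le> r" "k - i \<le> r" "k \<le> n" using n2 by auto
      have "q k i (k - i) = q (n - k) (r - i) (r - (k - i))" using symm[OF kr(4)] kr by blast
      moreover have "r - (k - i) = r - k + i" using ki kr by simp
      moreover obtain c :: real where "c > 0" "q k i (k - i) = of_real c * q 0 0 0"
        using pos[of k, rule_format, of i "k-i"] kr ki by auto
      moreover have "q 0 0 0 \<noteq> 0" using assms(5) m0 by simp
      ultimately show "q k i (k - i) = q (n - k) (r - i) (r - k + i) \<and> q k i (k - i) \<noteq> 0"
        by (metis mult_eq_0_iff of_real_eq_0_iff less_irrefl)
    qed
  qed
  show ?thesis using part1 part2 by blast
qed

end
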